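(* Let $f$ be a function of unitation on $\{0,1\}^n$ and let $\sigma=1$, $\kappa\in\mathbb{N}$ and $\mu\geq (n+1)\cdot\kappa$. Then the expected optimisation time of the $(\mu+1)$ EA with phenotypic clearing with clearing radius $\sigma$, niche capacity $\kappa$ and population size $\mu$ on $f$ is $O(\mu n\log n)$.
   Context: A function of unitation is $f:\{0,1\}^n\to\mathbb{R}$ with $f(x)=u(|x|_1)$ for some $u:\{0,\dots,n\}\to\mathbb{R}^+$, where $|x|_1$ is the number of 1-bits of $x$; fitness values are assumed positive. The optimisation time is the number of generations until a global maximum of $f$ is found. The $(\mu+1)$ EA with clearing (population size $\mu$, clearing radius $\sigma$, niche capacity $\kappa$, distance function $\mathrm{d}$): $P_0$ consists of $\mu$ bit strings chosen independently and uniformly at random. In generation $t$: choose a parent $x\in P_t$ uniformly at random; create $y$ by flipping each bit of $x$ independently with probability $1/n$; let $P_t^*=P_t\cup\{y\}$; update the fitness values of $P_t^*$ by the clearing procedure: sort $P_t^*$ by decreasing fitness; for $i=1,\dots,|P_t^*|$, if the current fitness of $P[i]$ is positive, set $w:=1$ and for $j=i+1,\dots,|P_t^*|$: if the current fitness of $P[j]$ is positive and $\mathrm{d}(P[i],P[j])<\sigma$ then, if $w<\kappa$ set $w:=w+1$, else set the fitness of $P[j]$ to $0$. Individuals whose fitness is not reset are winners, the others are cleared. Then choose $z\in P_t$ with worst (cleared) fitness uniformly at random; if the (cleared) fitness of $y$ is at least that of $z$, set $P_{t+1}=P_t^*\setminus\{z\}$, otherwise $P_{t+1}=P_t^*\setminus\{y\}$.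 Phenotypic clearing uses $\mathrm{d}(x,y)=\big||x|_1-|y|_1\big|$. *)

theory Defs
  imports "HOL-Probability.Probability"
begin

text \<open>Bit strings are boolean lists of length n; a population is a list of bit strings.\<close>

definition unitation :: "bool list \<Rightarrow> nat" where
  "unitation x = length (filter id x)"

definition pheno_dist :: "bool list \<Rightarrow> bool list \<Rightarrow> nat" where
  "pheno_dist x y = nat \<bar>int (unitation x) - int (unitation y)\<bar>"

text \<open>Inner loop of the clearing procedure (winner at index i, remaining sorted indices js,
  counter w, current fitness values fit indexed by position in the population list).\<close>
fun clear_inner :: "(bool list \<Rightarrow> bool list \<Rightarrow> nat) \<Rightarrow> nat \<Rightarrow> nat \<Rightarrow> (nat \<Rightarrow> bool list)
    \<Rightarrow> nat \<Rightarrow> nat list \<Rightarrow> nat \<Rightarrow> (nat \<Rightarrow> real) \<Rightarrow> (nat \<Rightarrow> real)" where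
  "clear_inner d \<sigma> \<kappa> X i [] w fit = fit"
| "clear_inner d \<sigma> \<kappa> X i (j # js) w fit =
     (if fit j > 0 \<and> d (X i) (X j) < \<sigma> then
        (if w < \<kappa> then clear_inner d \<sigma> \<kappa> X i js (w + 1) fit
         else clear_inner d \<sigma> \<kappa> X i js w (fit(j := 0)))
      else clear_inner d \<sigma> \<kappa> X i js w fit)"

fun clear_outer :: "(bool list \<Rightarrow> bool list \<Rightarrow> nat) \<Rightarrow> nat \<Rightarrow> nat \<Rightarrow> (nat \<Rightarrow> bool list)
    \<Rightarrow> nat list \<Rightarrow> (nat \<Rightarrow> real) \<Rightarrow> (nat \<Rightarrow> real)" where
  "clear_outer d \<sigma> \<kappa> X [] fit = fit"
| "clear_outer d \<sigma> \<kappa> X (i # is) fit =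
     clear_outer d \<sigma> \<kappa> X is (if fit i > 0 then clear_inner d \<sigma> \<kappa> X i is 1 fit else fit)"

text \<open>Cleared fitness of each position of the list Ps: sort positions by decreasing fitness
  (stable sort, ties broken by position) and run the clearing procedure.\<close>
definition clearing :: "(bool list \<Rightarrow> bool list \<Rightarrow> nat) \<Rightarrow> nat \<Rightarrow> nat \<Rightarrow> (bool list \<Rightarrow> real)
    \<Rightarrow> bool list list \<Rightarrow> nat \<Rightarrow> real" where
  "clearing d \<sigma> \<kappa> f Ps =
     clear_outer d \<sigma> \<kappa> (\<lambda>i. Ps ! i) (sort_key (\<lambda>i. - f (Ps ! i)) [0..<length Ps]) (\<lambda>i. f (Ps ! i))"

fun mutate :: "nat \<Rightarrow> bool list \<Rightarrow> bool list pmf" where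
  "mutate n [] = return_pmf []"
| "mutate n (b # bs) =
     bind_pmf (bernoulli_pmf (1 / real n)) (\<lambda>c.
     bind_pmf (mutate n bs) (\<lambda>r. return_pmf ((b \<noteq> c) # r)))"

definition ea_step :: "(bool list \<Rightarrow> bool list \<Rightarrow> nat) \<Rightarrow> nat \<Rightarrow> nat \<Rightarrow> nat \<Rightarrow> nat
    \<Rightarrow> (bool list \<Rightarrow> real) \<Rightarrow> bool list list \<Rightarrow> bool list list pmf" where
  "ea_step d \<sigma> \<kappa> \<mu> n f P =
     bind_pmf (pmf_of_set {..<\<mu>}) (\<lambda>i.
     bind_pmf (mutate n (P ! i)) (\<lambda>y.
       let Ps = P @ [y];
           c = clearing d \<sigma> \<kappa> f Ps;
           m = Min (c ` {..<\<mu>})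
       in map_pmf (\<lambda>z. if c z \<le> c \<mu> then take z Ps @ drop (Suc z) Ps else P)
                  (pmf_of_set {z. z < \<mu> \<and> c z = m})))"

definition ea_init :: "nat \<Rightarrow> nat \<Rightarrow> bool list list pmf" where
  "ea_init \<mu> n = pmf_of_set {P. length P = \<mu> \<and> (\<forall>x\<in>set P. length x = n)}"

fun ea_path :: "(bool list \<Rightarrow> bool list \<Rightarrow> nat) \<Rightarrow> nat \<Rightarrow> nat \<Rightarrow> nat \<Rightarrow> nat
    \<Rightarrow> (bool list \<Rightarrow> real) \<Rightarrow> nat \<Rightarrow> bool list list list pmf" where
  "ea_path d \<sigma> \<kappa> \<mu> n f 0 = map_pmf (\<lambda>P. [P]) (ea_init \<mu> n)"
| "ea_path d \<sigma> \<kappa> \<mu> n f (Suc t) =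
     bind_pmf (ea_path d \<sigma> \<kappa> \<mu> n f t) (\<lambda>ps.
       map_pmf (\<lambda>P. ps @ [P]) (ea_step d \<sigma> \<kappa> \<mu> n f (last ps)))"

definition optimal :: "nat \<Rightarrow> (nat \<Rightarrow> real) \<Rightarrow> bool list \<Rightarrow> bool" where
  "optimal n u x \<longleftrightarrow> u (unitation x) = Max (u ` {0..n})"

text \<open>Expected optimisation time T (number of generations until an optimum is in the
  population), via E[T] = sum over t of Pr[T > t], where T > t iff none of P_0..P_t
  contains a global optimum.\<close>
definition expected_opt_time :: "(bool list \<Rightarrow> bool list \<Rightarrow> nat) \<Rightarrow> nat \<Rightarrow> nat \<Rightarrow> nat \<Rightarrow> nat
    \<Rightarrow> (nat \<Rightarrow> real) \<Rightarrow> ennreal" where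
  "expected_opt_time d \<sigma> \<kappa> \<mu> n u =
     (\<Sum>t. ennreal (measure_pmf.prob (ea_path d \<sigma> \<kappa> \<mu> n (\<lambda>x. u (unitation x)) t)
                      {ps. \<forall>P\<in>set ps. \<forall>x\<in>set P. \<not> optimal n u x}))"

end

theory Submission
  imports Defs
begin


lemma ci_notin: "j \<notin> set js \<Longrightarrow> clear_inner d \<sigma> \<kappa> X i js w fit j = fit j"
  by (induction js arbitrary: w fit) auto

lemma ci_cases: "clear_inner d \<sigma> \<kappa> X i js w fit j = fit j \<or>
   (clear_inner d \<sigma> \<kappa> X i js w fit j = 0 \<and> j \<in> set js \<and> d (X i) (X j) < \<sigma>)"
proof (induction js arbitrary: w fit)
  case Nil then show ?case by simp
next
  case (Cons a js)
  show ?case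
  proof (cases "fit a > 0 \<and> d (X i) (X a) < \<sigma>")
    case True
    show ?thesis
    proof (cases "w < \<kappa>")
      case True with \<open>fit a > 0 \<and> d (X i) (X a) < \<sigma>\<close> show ?thesis using Cons[of "w+1" fit] by auto
    next
      case False
      have r: "clear_inner d \<sigma> \<kappa> X i (a # js) w fit j = clear_inner d \<sigma> \<kappa> X i js w (fit(a:=0)) j"
        using True False by simp
      have h: "clear_inner d \<sigma> \<kappa> X i js w (fit(a:=0)) j = (fit(a:=0)) j \<or>
         (clear_inner d \<sigma> \<kappa> X i js w (fit(a:=0)) j = 0 \<and> j \<in> set js \<and> d (X i) (X j) < \<sigma>)"
        using Cons[of w "fit(a:=0)"] .
      show ?thesis
      proof (cases "j = a")
        case True
        then have "clear_inner d \<sigma> \<kappa> X i js w (fit(a:=0)) j = 0" using h by auto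
        then show ?thesis using r True \<open>fit a > 0 \<and> d (X i) (X a) < \<sigma>\<close> by simp
      next
        case False
        then have "(fit(a:=0)) j = fit j" by simp
        then show ?thesis using r h by auto
      qed
    qed
  next
    case False then show ?thesis using Cons[of w fit] by auto
  qed
qed

lemma ci_count:
  assumes "distinct js" "w \<le> \<kappa>"
  shows "card {j\<in>set js. d (X i) (X j) < \<sigma> \<and> clear_inner d \<sigma> \<kappa> X i js w fit j > 0} + w \<le> \<kappa>"
  using assms
proof (induction js arbitrary: w fit)
  case Nil then show ?case by simp
next
  case (Cons a js)
  let ?r = "clear_inner d \<sigma> \<kappa> X i (a # js) w fit"
  have dj: "distinct js" "a \<notin> set js" using Cons.prems by auto
  show ?case
  proof (cases "fit a > 0 \<and> d (X i) (X a) < \<sigma>")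
    case True
    show ?thesis
    proof (cases "w < \<kappa>")
      case wk: True
      have r: "?r = clear_inner d \<sigma> \<kappa> X i js (w+1) fit" using True wk by simp
      have ra: "?r a = fit a" using r ci_notin[OF dj(2)] by simp
      have "{j\<in>set (a#js). d (X i) (X j) < \<sigma> \<and> ?r j > 0} =
            insert a {j\<in>set js. d (X i) (X j) < \<sigma> \<and> clear_inner d \<sigma> \<kappa> X i js (w+1) fit j > 0}"
        using True ra r by auto
      moreover have "card {j\<in>set js. d (X i) (X j) < \<sigma> \<and> clear_inner d \<sigma> \<kappa> X i js (w+1) fit j > 0} + (w+1) \<le> \<kappa>"
        using Cons.IH[of "w+1" fit, OF dj(1)] wk by simp
      ultimately show ?thesis by (simp add: card_insert_if)
    next
      case wk: False
      have r: "?r = clear_inner d \<sigma> \<kappa> X i js w (fit(a:=0))" using True wk by simp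
      have ra: "?r a = 0" using r ci_notin[OF dj(2)] by simp
      have "{j\<in>set (a#js). d (X i) (X j) < \<sigma> \<and> ?r j > 0} =
            {j\<in>set js. d (X i) (X j) < \<sigma> \<and> clear_inner d \<sigma> \<kappa> X i js w (fit(a:=0)) j > 0}"
        using ra r by auto
      then show ?thesis using Cons.IH[OF dj(1) Cons.prems(2)] by simp
    qed
  next
    case False
    have r: "?r = clear_inner d \<sigma> \<kappa> X i js w fit" using False by auto
    have ra: "\<not> (d (X i) (X a) < \<sigma> \<and> ?r a > 0)" using False r ci_notin[OF dj(2)] by auto
    have "{j\<in>set (a#js). d (X i) (X j) < \<sigma> \<and> ?r j > 0} =
            {j\<in>set js. d (X i) (X j) < \<sigma> \<and> clear_inner d \<sigma> \<kappa> X i js w fit j > 0}"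
      using ra r by auto
    then show ?thesis using Cons.IH[OF dj(1) Cons.prems(2)] by simp
  qed
qed

lemma co_notin: "j \<notin> set xs \<Longrightarrow> clear_outer d \<sigma> \<kappa> X xs fit j = fit j"
  by (induction xs arbitrary: fit) (auto simp: ci_notin)

lemma co_cases: "distinct xs \<Longrightarrow> clear_outer d \<sigma> \<kappa> X xs fit j = fit j \<or>
   (clear_outer d \<sigma> \<kappa> X xs fit j = 0 \<and> (\<exists>i\<in>set xs. i \<noteq> j \<and> d (X i) (X j) < \<sigma>))"
proof (induction xs arbitrary: fit)
  case Nil then show ?case by simp
next
  case (Cons a xs)
  define fit1 where "fit1 = (if fit a > 0 then clear_inner d \<sigma> \<kappa> X a xs 1 fit else fit)"
  have e: "clear_outer d \<sigma> \<kappa> X (a # xs) fit j = clear_outer d \<sigma> \<kappa> X xs fit1 j" by (simp add: fit1_def)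
  have f1: "fit1 j = fit j \<or> (fit1 j = 0 \<and> (\<exists>i\<in>set (a#xs). i \<noteq> j \<and> d (X i) (X j) < \<sigma>))"
    using ci_cases[of d \<sigma> \<kappa> X a xs 1 fit j] Cons.prems unfolding fit1_def by auto
  have "clear_outer d \<sigma> \<kappa> X xs fit1 j = fit1 j \<or>
   (clear_outer d \<sigma> \<kappa> X xs fit1 j = 0 \<and> (\<exists>i\<in>set xs. i \<noteq> j \<and> d (X i) (X j) < \<sigma>))"
    using Cons by auto
  then show ?case using e f1 by auto
qed

lemma co_count:
  assumes "distinct xs" "1 \<le> \<kappa>" and lev: "\<And>a b. d (X a) (X b) < \<sigma> \<longleftrightarrow> L a = L b"
  shows "card {j\<in>set xs. L j = l \<and> clear_outer d \<sigma> \<kappa> X xs fit j > 0} \<le> \<kappa>"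
  using assms(1)
proof (induction xs arbitrary: fit)
  case Nil then show ?case by simp
next
  case (Cons a xs)
  have dj: "distinct xs" "a \<notin> set xs" using Cons.prems by auto
  define fit1 where "fit1 = (if fit a > 0 then clear_inner d \<sigma> \<kappa> X a xs 1 fit else fit)"
  have e: "clear_outer d \<sigma> \<kappa> X (a # xs) fit = clear_outer d \<sigma> \<kappa> X xs fit1" by (simp add: fit1_def)
  let ?r = "clear_outer d \<sigma> \<kappa> X xs fit1"
  have ra: "?r a = fit1 a" using co_notin[OF dj(2)] by simp
  have fa: "fit1 a = fit a" using ci_notin[OF dj(2)] by (simp add: fit1_def)
  have pos: "fit1 j > 0" if "?r j > 0" for j
    using co_cases[OF dj(1), of d \<sigma> \<kappa> X fit1 j] that by auto
  have IH: "card {j\<in>set xs. L j = l \<and> ?r j > 0} \<le> \<kappa>" using Cons.IH[OF dj(1)] .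
  show ?case
  proof (cases "fit a > 0 \<and> L a = l")
    case True
    have "card {j\<in>set xs. d (X a) (X j) < \<sigma> \<and> clear_inner d \<sigma> \<kappa> X a xs 1 fit j > 0} + 1 \<le> \<kappa>"
      using ci_count[OF dj(1) assms(2)] .
    have f1: "fit1 = clear_inner d \<sigma> \<kappa> X a xs 1 fit" using True by (simp add: fit1_def)
    have sub1: "{j\<in>set xs. L j = l \<and> ?r j > 0} \<subseteq> {j\<in>set xs. d (X a) (X j) < \<sigma> \<and> clear_inner d \<sigma> \<kappa> X a xs 1 fit j > 0}"
    proof
      fix j assume "j \<in> {j\<in>set xs. L j = l \<and> ?r j > 0}"
      then show "j \<in> {j\<in>set xs. d (X a) (X j) < \<sigma> \<and> clear_inner d \<sigma> \<kappa> X a xs 1 fit j > 0}"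
        using pos[of j] lev[of a j] True f1 by simp
    qed
    have "card {j\<in>set xs. L j = l \<and> ?r j > 0} \<le> card {j\<in>set xs. d (X a) (X j) < \<sigma> \<and> clear_inner d \<sigma> \<kappa> X a xs 1 fit j > 0}"
      by (rule card_mono[OF _ sub1]) simp
    then have c1: "card {j\<in>set xs. L j = l \<and> ?r j > 0} + 1 \<le> \<kappa>" using \<open>card _ + 1 \<le> \<kappa>\<close> by linarith
    have sub: "{j\<in>set (a#xs). L j = l \<and> ?r j > 0} \<subseteq> insert a {j\<in>set xs. L j = l \<and> ?r j > 0}" by auto
    have "card {j\<in>set (a#xs). L j = l \<and> ?r j > 0} \<le> card (insert a {j\<in>set xs. L j = l \<and> ?r j > 0})"
      by (rule card_mono[OF _ sub]) simp
    also have "\<dots> \<le> card {j\<in>set xs. L j = l \<and> ?r j > 0} + 1" by (simp add: card_insert_le_m1 card_insert_if)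
    finally show ?thesis using e c1 by simp
  next
    case False
    have "{j\<in>set (a#xs). L j = l \<and> ?r j > 0} = {j\<in>set xs. L j = l \<and> ?r j > 0}"
      using False ra fa by auto
    then show ?thesis using e IH by simp
  qed
qed




lemma pheno_lt1: "pheno_dist a b < 1 \<longleftrightarrow> unitation a = unitation b"
  unfolding pheno_dist_def by auto

lemma pheno0: "pheno_dist a b = 0 \<longleftrightarrow> unitation a = unitation b"
  unfolding pheno_dist_def by auto

lemma clearing_cases:
  assumes "j < length Ps"
  shows "clearing pheno_dist 1 \<kappa> f Ps j = f (Ps ! j) \<or>
    (clearing pheno_dist 1 \<kappa> f Ps j = 0 \<and> (\<exists>i<length Ps. i \<noteq> j \<and> unitation (Ps ! i) = unitation (Ps ! j)))"
proof -
  let ?xs = "sort_key (\<lambda>i. - f (Ps ! i)) [0..<length Ps]"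
  have "distinct ?xs" by simp
  from co_cases[OF this, of pheno_dist 1 \<kappa> "\<lambda>i. Ps ! i" "\<lambda>i. f (Ps ! i)" j]
  show ?thesis unfolding clearing_def by (auto simp: pheno_lt1 pheno0)
qed

lemma clearing_count:
  assumes "1 \<le> \<kappa>"
  shows "card {j. j < length Ps \<and> unitation (Ps ! j) = l \<and> clearing pheno_dist 1 \<kappa> f Ps j > 0} \<le> \<kappa>"
proof -
  let ?xs = "sort_key (\<lambda>i. - f (Ps ! i)) [0..<length Ps]"
  have "distinct ?xs" by simp
  from co_count[OF this assms, where d=pheno_dist and \<sigma>=1 and X="\<lambda>i. Ps ! i" and L="\<lambda>i. unitation (Ps ! i)" and l=l and fit="\<lambda>i. f (Ps ! i)"] pheno_lt1
  have "card {j\<in>set ?xs. unitation (Ps ! j) = l \<and> clear_outer pheno_dist 1 \<kappa> (\<lambda>i. Ps ! i) ?xs (\<lambda>i. f (Ps ! i)) j > 0} \<le> \<kappa>"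
    by (simp add: pheno_lt1)
  moreover have "{j\<in>set ?xs. unitation (Ps ! j) = l \<and> clear_outer pheno_dist 1 \<kappa> (\<lambda>i. Ps ! i) ?xs (\<lambda>i. f (Ps ! i)) j > 0}
     = {j. j < length Ps \<and> unitation (Ps ! j) = l \<and> clearing pheno_dist 1 \<kappa> f Ps j > 0}"
    unfolding clearing_def by auto
  ultimately show ?thesis by simp
qed

lemma nth_in_remove:
  assumes "k < length Ps" "k \<noteq> z"
  shows "Ps ! k \<in> set (take z Ps @ drop (Suc z) Ps)"
proof (cases "k < z")
  case True
  then have "take z Ps ! k = Ps ! k" by simp
  moreover have "k < length (take z Ps)" using True assms by simp
  ultimately show ?thesis by (metis Un_iff nth_mem set_append)
next
  case False
  then have k: "k > z" using assms by simp
  then have "drop (Suc z) Ps ! (k - Suc z) = Ps ! k" using assms by simp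
  moreover have "k - Suc z < length (drop (Suc z) Ps)" using k assms by simp
  ultimately show ?thesis by (metis Un_iff nth_mem set_append)
qed

lemma remove_length: "z < length Ps \<Longrightarrow> length (take z Ps @ drop (Suc z) Ps) = length Ps - 1"
  by simp

lemma remove_set: "set (take z Ps @ drop (Suc z) Ps) \<subseteq> set Ps"
  using set_take_subset set_drop_subset by fastforce

lemma step_det:
  fixes P :: "bool list list" and y :: "bool list"
  assumes lenP: "length P = \<mu>" and lenx: "\<forall>x\<in>set P. length x = n" and leny: "length y = n"
    and fpos: "\<And>x. length x = n \<Longrightarrow> f x > 0"
    and k1: "1 \<le> \<kappa>" and mu: "(n + 1) * \<kappa> \<le> \<mu>"
    and ks: "ks \<le> n" and nopt: "ks \<notin> unitation ` set P"
  defines "Ps \<equiv> P @ [y]"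
  defines "c \<equiv> clearing pheno_dist 1 \<kappa> f Ps"
  shows "Min (c ` {..<\<mu>}) = 0"
    and "\<And>z. z < \<mu> \<Longrightarrow> c z = Min (c ` {..<\<mu>}) \<Longrightarrow>
          c z \<le> c \<mu> \<and> unitation ` set Ps \<subseteq> unitation ` set (take z Ps @ drop (Suc z) Ps)"
proof -
  have lPs: "length Ps = Suc \<mu>" using lenP by (simp add: Ps_def)
  have lenPs: "\<forall>x\<in>set Ps. length x = n" using lenx leny by (simp add: Ps_def)
  have cnn: "c j \<ge> 0" if "j < Suc \<mu>" for j
  proof -
    have "Ps ! j \<in> set Ps" using that lPs by simp
    then have "f (Ps ! j) > 0" using fpos lenPs by auto
    then show ?thesis using clearing_cases[of j Ps \<kappa> f] that lPs unfolding c_def by auto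
  qed
  have mupos: "\<mu> > 0" using mu k1 by (metis add_gr_0 less_le_trans mult_pos_pos zero_less_one)
  have ex0: "\<exists>j<\<mu>. c j \<le> 0"
  proof (rule ccontr)
    assume "\<not> ?thesis"
    then have allpos: "\<forall>j<\<mu>. c j > 0" by auto
    let ?L = "unitation ` set P"
    let ?A = "\<lambda>l. {j. j < length Ps \<and> unitation (Ps ! j) = l \<and> c j > 0}"
    have sub: "{..<\<mu>} \<subseteq> (\<Union>l\<in>?L. ?A l)"
    proof
      fix j assume j: "j \<in> {..<\<mu>}"
      then have "Ps ! j = P ! j" using lenP by (simp add: Ps_def nth_append)
      then have "unitation (Ps ! j) \<in> ?L" using j lenP by auto
      then show "j \<in> (\<Union>l\<in>?L. ?A l)" using j allpos lPs by auto
    qed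
    have Lsub: "?L \<subseteq> {0..n} - {ks}"
    proof
      fix l assume "l \<in> ?L"
      then obtain x where x: "x \<in> set P" "l = unitation x" by auto
      have "unitation x \<le> length x" unfolding unitation_def by simp
      then show "l \<in> {0..n} - {ks}" using x lenx nopt by auto
    qed
    have cardL: "card ?L \<le> n"
    proof -
      have "card ?L \<le> card ({0..n} - {ks})" by (rule card_mono[OF _ Lsub]) simp
      also have "\<dots> = n" using ks by simp
      finally show ?thesis .
    qed
    have "\<mu> = card {..<\<mu>}" by simp
    also have "\<dots> \<le> card (\<Union>l\<in>?L. ?A l)" by (rule card_mono[OF _ sub]) auto
    also have "\<dots> \<le> (\<Sum>l\<in>?L. card (?A l))" by (rule card_UN_le) simp
    also have "\<dots> \<le> (\<Sum>l\<in>?L. \<kappa>)" by (rule sum_mono) (use clearing_count[OF k1] in \<open>simp add: c_def\<close>)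
    also have "\<dots> = card ?L * \<kappa>" by simp
    also have "\<dots> \<le> n * \<kappa>" using cardL by simp
    finally have "\<mu> \<le> n * \<kappa>" .
    then show False using mu k1 by simp
  qed
  then obtain j0 where j0: "j0 < \<mu>" "c j0 \<le> 0" by auto
  have "c j0 = 0" using j0 cnn[of j0] by simp
  have fin: "finite (c ` {..<\<mu>})" by simp
  have ne: "c ` {..<\<mu>} \<noteq> {}" using mupos by auto
  have "Min (c ` {..<\<mu>}) \<le> 0" using Min_le[OF fin, of "c j0"] j0 \<open>c j0 = 0\<close> by auto
  moreover have "Min (c ` {..<\<mu>}) \<ge> 0" using Min_in[OF fin ne] cnn by auto
  ultimately show m0: "Min (c ` {..<\<mu>}) = 0" by simp
  fix z assume z: "z < \<mu>" "c z = Min (c ` {..<\<mu>})"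
  have cz: "c z = 0" using z m0 by simp
  have "c z \<le> c \<mu>" using cz cnn[of \<mu>] by simp
  moreover have "unitation ` set Ps \<subseteq> unitation ` set (take z Ps @ drop (Suc z) Ps)"
  proof
    fix l assume "l \<in> unitation ` set Ps"
    then obtain k where k: "k < length Ps" "l = unitation (Ps ! k)" by (auto simp: in_set_conv_nth)
    show "l \<in> unitation ` set (take z Ps @ drop (Suc z) Ps)"
    proof (cases "k = z")
      case False
      then show ?thesis using nth_in_remove[OF k(1) False] k by auto
    next
      case True
      have zl: "z < length Ps" using z lPs by simp
      have "f (Ps ! z) > 0" using fpos lenPs zl by auto
      then obtain i where i: "i < length Ps" "i \<noteq> z" "unitation (Ps ! i) = unitation (Ps ! z)"
        using clearing_cases[OF zl, of \<kappa> f] cz unfolding c_def by auto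
      have "unitation (Ps ! i) \<in> unitation ` set (take z Ps @ drop (Suc z) Ps)"
        using nth_in_remove[OF i(1) i(2)] by (rule imageI)
      then show ?thesis using i k True by simp
    qed
  qed
  ultimately show "c z \<le> c \<mu> \<and> unitation ` set Ps \<subseteq> unitation ` set (take z Ps @ drop (Suc z) Ps)" by simp
qed




definition pflip :: "real \<Rightarrow> bool list \<Rightarrow> bool list \<Rightarrow> real" where
  "pflip p x y = (if length y = length x then (\<Prod>k<length x. if x ! k \<noteq> y ! k then p else 1 - p) else 0)"

lemma pmf_map_Cons: "pmf (map_pmf (Cons a) M) (b # ys) = (if b = a then pmf M ys else 0)"
proof (cases "b = a")
  case True
  then show ?thesis using pmf_map_inj'[of "Cons a" M ys] by (simp add: inj_on_def)
next
  case False
  then have "b # ys \<notin> set_pmf (map_pmf (Cons a) M)" by auto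
  then show ?thesis using False by (simp add: pmf_eq_0_set_pmf)
qed

lemma pmf_map_Cons_Nil: "pmf (map_pmf (Cons a) M) [] = 0"
proof -
  have "[] \<notin> set_pmf (map_pmf (Cons a) M)" by auto
  then show ?thesis by (simp add: pmf_eq_0_set_pmf)
qed

lemma pflip_Cons: "pflip p (b # bs) (y0 # ys) = (if y0 \<noteq> b then p else 1 - p) * pflip p bs ys"
  by (auto simp: pflip_def prod.lessThan_Suc_shift simp del: prod.lessThan_Suc)

lemma pmf_mutate:
  assumes "n \<ge> 1"
  shows "pmf (mutate n x) y = pflip (1 / real n) x y"
proof (induction x arbitrary: y)
  case Nil
  then show ?case by (cases y) (auto simp: pflip_def)
next
  case (Cons b bs)
  let ?p = "1 / real n"
  have p: "0 \<le> ?p" "?p \<le> 1" using assms by auto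
  have e: "mutate n (b # bs) = bind_pmf (bernoulli_pmf ?p) (\<lambda>c. map_pmf (Cons (b \<noteq> c)) (mutate n bs))"
    by (simp add: map_pmf_def)
  show ?case
  proof (cases y)
    case Nil
    have "pmf (mutate n (b # bs)) y = (\<integral>c. pmf (map_pmf (Cons (b \<noteq> c)) (mutate n bs)) y \<partial>bernoulli_pmf ?p)"
      by (simp only: e pmf_bind)
    also have "\<dots> = 0" using Nil by (simp only: pmf_map_Cons_Nil) simp
    finally show ?thesis using Nil by (simp add: pflip_def)
  next
    case (Cons y0 ys)
    have "pmf (mutate n (b # bs)) y = (\<integral>c. pmf (map_pmf (Cons (b \<noteq> c)) (mutate n bs)) y \<partial>bernoulli_pmf ?p)"
      by (simp only: e pmf_bind)
    also have "\<dots> = pmf (map_pmf (Cons (b \<noteq> True)) (mutate n bs)) y * ?p + pmf (map_pmf (Cons (b \<noteq> False)) (mutate n bs)) y * (1 - ?p)"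
      by (rule integral_bernoulli_pmf[OF p])
    also have "\<dots> =
        pmf (map_pmf (Cons (\<not> b)) (mutate n bs)) y * ?p + pmf (map_pmf (Cons b) (mutate n bs)) y * (1 - ?p)"
      by simp
    also have "\<dots> = (if y0 \<noteq> b then ?p else 1 - ?p) * pflip ?p bs ys"
      using Cons by (auto simp: pmf_map_Cons Cons.IH)
    also have "\<dots> = pflip ?p (b # bs) y"
      using Cons by (simp only: pflip_Cons)
    finally show ?thesis .
  qed
qed

lemma pflip_single:
  assumes "k < length x"
  shows "pflip p x (x[k := \<not> x ! k]) = p * (1 - p) ^ (length x - 1)"
proof -
  have "pflip p x (x[k := \<not> x ! k]) = (\<Prod>j<length x. if x ! j \<noteq> x[k := \<not> x ! k] ! j then p else 1 - p)"
    by (simp add: pflip_def)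
  also have "\<dots> = (\<Prod>j<length x. if j = k then p else 1 - p)"
    by (intro prod.cong) (auto simp: nth_list_update)
  also have "\<dots> = p * (\<Prod>j\<in>{..<length x} - {k}. if j = k then p else 1 - p)"
    using assms by (subst prod.remove[of _ k]) auto
  also have "(\<Prod>j\<in>{..<length x} - {k}. if j = k then p else 1 - p) = (\<Prod>j\<in>{..<length x} - {k}. 1 - p)"
    by (intro prod.cong) auto
  also have "\<dots> = (1 - p) ^ (length x - 1)" using assms by simp
  finally show ?thesis .
qed

lemma unit_card: "unitation x = card {i. i < length x \<and> x ! i}"
  unfolding unitation_def by (simp add: length_filter_conv_card)

lemma unit_flip:
  assumes "k < length x"
  shows "unitation (x[k := \<not> x ! k]) = (if x ! k then unitation x - 1 else unitation x + 1)"
proof (cases "x ! k")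
  case True
  have "{i. i < length (x[k := \<not> x ! k]) \<and> x[k := \<not> x ! k] ! i} = {i. i < length x \<and> x ! i} - {k}"
    using True assms by (auto simp: nth_list_update)
  moreover have "k \<in> {i. i < length x \<and> x ! i}" using True assms by simp
  ultimately show ?thesis using True by (simp add: unit_card)
next
  case False
  have "{i. i < length (x[k := \<not> x ! k]) \<and> x[k := \<not> x ! k] ! i} = insert k {i. i < length x \<and> x ! i}"
    using False assms by (auto simp: nth_list_update)
  moreover have "k \<notin> {i. i < length x \<and> x ! i}" using False by simp
  ultimately show ?thesis using False by (simp add: unit_card)
qed

lemma card_false: "card {i. i < length x \<and> \<not> x ! i} = length x - unitation x"
proof -
  have "{i. i < length x \<and> \<not> x ! i} = {..<length x} - {i. i < length x \<and> x ! i}" by auto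
  moreover have "{i. i < length x \<and> x ! i} \<subseteq> {..<length x}" by auto
  ultimately show ?thesis by (simp add: card_Diff_subset unit_card)
qed

definition dst :: "nat \<Rightarrow> nat \<Rightarrow> nat" where "dst k a = (a - k) + (k - a)"

lemma mut_prob:
  assumes n: "n \<ge> 1" and lx: "length x = n" and ks: "ks \<le> n"
    and g: "dst ks (unitation x) = g" "g \<ge> 1"
  shows "measure_pmf.prob (mutate n x) {y. dst ks (unitation y) < g}
           \<ge> real g * ((1 / real n) * (1 - 1 / real n) ^ (n - 1))"
proof -
  let ?p = "1 / real n"
  define b0 where "b0 = (ks < unitation x)"
  define G where "G = {k. k < n \<and> x ! k = b0}"
  define fl where "fl = (\<lambda>k. x[k := \<not> x ! k])"
  have uxn: "unitation x \<le> n" using lx unfolding unitation_def by (metis length_filter_le)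
  have cardG: "card G \<ge> g"
  proof (cases b0)
    case True
    then have "G = {i. i < length x \<and> x ! i}" using lx by (auto simp: G_def)
    then show ?thesis using g True by (simp add: unit_card[symmetric] dst_def b0_def)
  next
    case False
    then have "G = {i. i < length x \<and> \<not> x ! i}" using lx by (auto simp: G_def)
    then show ?thesis using g False lx ks card_false[of x] uxn by (simp add: dst_def b0_def)
  qed
  have inj: "inj_on fl G"
  proof
    fix k k' assume "k \<in> G" "k' \<in> G" "fl k = fl k'"
    then have "fl k ! k = fl k' ! k" by simp
    then show "k = k'" using \<open>k \<in> G\<close> lx unfolding fl_def G_def by (cases "k = k'") (auto simp: nth_list_update)
  qed
  have sub: "fl ` G \<subseteq> {y. dst ks (unitation y) < g}"
  proof
    fix y assume "y \<in> fl ` G"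
    then obtain k where k: "k \<in> G" "y = fl k" by auto
    have kl: "k < length x" using k lx by (simp add: G_def)
    have "unitation y = (if b0 then unitation x - 1 else unitation x + 1)"
      using k unit_flip[OF kl] by (simp add: fl_def G_def)
    then show "y \<in> {y. dst ks (unitation y) < g}" using g b0_def by (auto simp: dst_def)
  qed
  have "measure_pmf.prob (mutate n x) {y. dst ks (unitation y) < g} \<ge> measure_pmf.prob (mutate n x) (fl ` G)"
    by (rule measure_pmf.finite_measure_mono[OF sub]) simp
  moreover have "measure_pmf.prob (mutate n x) (fl ` G) = (\<Sum>y\<in>fl ` G. pmf (mutate n x) y)"
    by (rule measure_measure_pmf_finite) (simp add: G_def)
  moreover have "\<dots> = (\<Sum>k\<in>G. pmf (mutate n x) (fl k))" by (rule sum.reindex[OF inj, unfolded comp_def])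
  moreover have "\<dots> = (\<Sum>k\<in>G. ?p * (1 - ?p) ^ (n - 1))"
  proof (intro sum.cong refl)
    fix k assume "k \<in> G"
    then have kl: "k < length x" using lx by (simp add: G_def)
    have "pmf (mutate n x) (fl k) = pflip ?p x (fl k)" using n by (rule pmf_mutate)
    also have "\<dots> = ?p * (1 - ?p) ^ (length x - 1)" unfolding fl_def by (rule pflip_single[OF kl])
    finally show "pmf (mutate n x) (fl k) = ?p * (1 - ?p) ^ (n - 1)" using lx by simp
  qed
  moreover have "\<dots> = real (card G) * (?p * (1 - ?p) ^ (n - 1))" by simp
  moreover have "real (card G) * (?p * (1 - ?p) ^ (n - 1)) \<ge> real g * (?p * (1 - ?p) ^ (n - 1))"
    using cardG n by (intro mult_right_mono) auto
  ultimately show ?thesis by linarith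
qed

lemma exp_bound:
  assumes "n \<ge> (2::nat)"
  shows "(1 - 1 / real n) ^ (n - 1) \<ge> exp (-1)"
proof -
  let ?q = "1 - 1 / real n"
  have q: "?q > 0" using assms by (simp add: field_simps)
  have "ln (inverse ?q) \<le> inverse ?q - 1" by (rule ln_le_minus_one) (use q in simp)
  moreover have "inverse ?q - 1 = 1 / (real n - 1)" using assms by (simp add: field_simps)
  moreover have "ln (inverse ?q) = - ln ?q" by (rule ln_inverse)
  ultimately have "- ln ?q \<le> 1 / (real n - 1)" by simp
  then have "real (n - 1) * ln ?q \<ge> -1" using assms by (simp add: field_simps of_nat_diff)
  then have "exp (real (n - 1) * ln ?q) \<ge> exp (-1)" by (simp only: exp_le_cancel_iff)
  moreover have "exp (real (n - 1) * ln ?q) = ?q ^ (n - 1)" using q by (simp add: exp_of_nat_mult)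
  ultimately show ?thesis by linarith
qed




definition valid :: "nat \<Rightarrow> nat \<Rightarrow> bool list list \<Rightarrow> bool" where
  "valid \<mu> n P \<longleftrightarrow> length P = \<mu> \<and> (\<forall>x\<in>set P. length x = n)"

lemma nn_le_bound:
  assumes "\<And>x. x \<in> set_pmf M \<Longrightarrow> f x \<le> b"
  shows "(\<integral>\<^sup>+x. f x \<partial>measure_pmf M) \<le> b"
proof -
  have "(\<integral>\<^sup>+x. f x \<partial>measure_pmf M) \<le> (\<integral>\<^sup>+x. b \<partial>measure_pmf M)"
    by (rule nn_integral_mono_AE) (use assms in \<open>simp add: AE_measure_pmf_iff\<close>)
  also have "\<dots> = b" by (simp add: measure_pmf.emeasure_space_1)
  finally show ?thesis .
qed

lemma nn_le_bound2:
  assumes "\<And>x. x \<in> set_pmf M \<Longrightarrow> f x + a * indicator A x \<le> b"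
  shows "(\<integral>\<^sup>+x. f x \<partial>measure_pmf M) + a * emeasure (measure_pmf M) A \<le> b"
proof -
  have "(\<integral>\<^sup>+x. f x \<partial>measure_pmf M) + a * emeasure (measure_pmf M) A
      = (\<integral>\<^sup>+x. f x \<partial>measure_pmf M) + (\<integral>\<^sup>+x. a * indicator A x \<partial>measure_pmf M)"
    by (simp add: nn_integral_cmult)
  also have "\<dots> = (\<integral>\<^sup>+x. f x + a * indicator A x \<partial>measure_pmf M)"
    by (rule nn_integral_add[symmetric]) simp_all
  also have "\<dots> \<le> b" by (rule nn_le_bound) (use assms in auto)
  finally show ?thesis .
qed

lemma mutate_length:
  assumes "n \<ge> 1" "y \<in> set_pmf (mutate n x)"
  shows "length y = length x"
proof -
  have "pmf (mutate n x) y \<noteq> 0" using assms(2) by (simp add: pmf_eq_0_set_pmf)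
  then show ?thesis using pmf_mutate[OF assms(1)] by (auto simp: pflip_def split: if_splits)
qed

lemma inner_support:
  assumes "\<mu> > 0" "P' \<in> set_pmf (let Ps = P @ [y]; c = clearing d \<sigma> \<kappa> f Ps; m = Min (c ` {..<\<mu>})
       in map_pmf (\<lambda>z. if c z \<le> c \<mu> then take z Ps @ drop (Suc z) Ps else P)
                  (pmf_of_set {z. z < \<mu> \<and> c z = m}))"
  shows "\<exists>z<\<mu>. clearing d \<sigma> \<kappa> f (P @ [y]) z = Min (clearing d \<sigma> \<kappa> f (P @ [y]) ` {..<\<mu>}) \<and>
     P' = (if clearing d \<sigma> \<kappa> f (P @ [y]) z \<le> clearing d \<sigma> \<kappa> f (P @ [y]) \<mu>
           then take z (P @ [y]) @ drop (Suc z) (P @ [y]) else P)"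
proof -
  define Ps where "Ps = P @ [y]"
  define c where "c = clearing d \<sigma> \<kappa> f Ps"
  define m where "m = Min (c ` {..<\<mu>})"
  have ne: "{z. z < \<mu> \<and> c z = m} \<noteq> {}"
  proof -
    have "m \<in> c ` {..<\<mu>}" unfolding m_def using assms(1) by (intro Min_in) auto
    then show ?thesis by auto
  qed
  have fin: "finite {z. z < \<mu> \<and> c z = m}" by simp
  have "P' \<in> (\<lambda>z. if c z \<le> c \<mu> then take z Ps @ drop (Suc z) Ps else P) ` {z. z < \<mu> \<and> c z = m}"
    using assms(2) unfolding Ps_def[symmetric] c_def[symmetric] m_def[symmetric] Let_def set_map_pmf
      set_pmf_of_set[OF ne fin] .
  then show ?thesis unfolding Ps_def c_def m_def by blast
qed

lemma step_valid:
  assumes "valid \<mu> n P" "\<mu> > 0" "n \<ge> 1" "P' \<in> set_pmf (ea_step d \<sigma> \<kappa> \<mu> n f P)"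
  shows "valid \<mu> n P'"
proof -
  have su: "set_pmf (pmf_of_set {..<\<mu>}) = {..<\<mu>}" using assms(2) by (intro set_pmf_of_set) auto
  define K where "K = (\<lambda>y. let Ps = P @ [y]; c = clearing d \<sigma> \<kappa> f Ps; m = Min (c ` {..<\<mu>})
       in map_pmf (\<lambda>z. if c z \<le> c \<mu> then take z Ps @ drop (Suc z) Ps else P)
                  (pmf_of_set {z. z < \<mu> \<and> c z = m}))"
  have e: "ea_step d \<sigma> \<kappa> \<mu> n f P = bind_pmf (pmf_of_set {..<\<mu>}) (\<lambda>i. bind_pmf (mutate n (P ! i)) K)"
    unfolding ea_step_def K_def by (rule refl)
  have "P' \<in> (\<Union>i\<in>{..<\<mu>}. \<Union>y\<in>set_pmf (mutate n (P ! i)). set_pmf (K y))"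
    using assms(4) unfolding e set_bind_pmf su .
  then obtain i y where i: "i < \<mu>" and y: "y \<in> set_pmf (mutate n (P ! i))" and P': "P' \<in> set_pmf (K y)"
    by blast
  note P' = P'[unfolded K_def]
  define Ps where "Ps = P @ [y]"
  define c where "c = clearing d \<sigma> \<kappa> f Ps"
  have lP: "length P = \<mu>" and lx: "\<forall>x\<in>set P. length x = n" using assms(1) by (auto simp: valid_def)
  have ly: "length y = n" using mutate_length[OF assms(3) y] i lP lx by auto
  from inner_support[OF assms(2) P'] obtain z where z: "z < \<mu>" and
    P'e: "P' = (if c z \<le> c \<mu> then take z Ps @ drop (Suc z) Ps else P)"
    unfolding Ps_def c_def by blast
  have lPs: "length Ps = Suc \<mu>" using lP by (simp add: Ps_def)
  have sPs: "\<forall>x\<in>set Ps. length x = n" using lx ly by (simp add: Ps_def)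
  show ?thesis
  proof (cases "c z \<le> c \<mu>")
    case True
    then have "P' = take z Ps @ drop (Suc z) Ps" using P'e by simp
    then show ?thesis using z lPs sPs remove_set[of z Ps] unfolding valid_def by auto
  next
    case False
    then show ?thesis using P'e assms(1) by simp
  qed
qed




definition gP :: "nat \<Rightarrow> bool list list \<Rightarrow> nat" where
  "gP ks P = Min ((\<lambda>x. dst ks (unitation x)) ` set P)"

definition hh :: "real \<Rightarrow> nat \<Rightarrow> real" where
  "hh c d = (\<Sum>i\<in>{1..d}. c / real i)"

lemma hh_mono: "c \<ge> 0 \<Longrightarrow> d1 \<le> d2 \<Longrightarrow> hh c d1 \<le> hh c d2"
  unfolding hh_def by (intro sum_mono2) auto

lemma hh_nonneg: "c \<ge> 0 \<Longrightarrow> hh c d \<ge> 0"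
  unfolding hh_def by (intro sum_nonneg) auto

lemma hh_step: "d \<ge> 1 \<Longrightarrow> hh c d = hh c (d - 1) + c / real d"
proof -
  assume "d \<ge> 1"
  then have e: "{1..d} = insert d {1..d-1}" by auto
  show ?thesis unfolding hh_def e by (subst sum.insert) (auto simp: add.commute)
qed

lemma gP_le:
  assumes "x \<in> set P" shows "gP ks P \<le> dst ks (unitation x)"
  unfolding gP_def using assms by (intro Min_le) auto

lemma gP_le_lev:
  assumes "unitation x \<in> unitation ` set P" shows "gP ks P \<le> dst ks (unitation x)"
proof -
  from assms obtain x' where "x' \<in> set P" "unitation x' = unitation x" by auto
  then show ?thesis using gP_le[of x' P ks] by simp
qed

lemma unit_le: "unitation x \<le> length x"
  unfolding unitation_def by (metis length_filter_le)

lemma drift: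
  fixes P :: "bool list list"
  assumes n2: "n \<ge> 2" and k1: "1 \<le> \<kappa>" and mu: "(n + 1) * \<kappa> \<le> \<mu>" and ks: "ks \<le> n"
    and fpos: "\<And>x. length x = n \<Longrightarrow> f x > 0"
    and vP: "valid \<mu> n P" and nopt: "ks \<notin> unitation ` set P"
    and cdef: "c = exp 1 * real n * real \<mu>"
  shows "(\<integral>\<^sup>+P'. ennreal (hh c (gP ks P')) \<partial>measure_pmf (ea_step pheno_dist 1 \<kappa> \<mu> n f P)) + 1
           \<le> ennreal (hh c (gP ks P))"
proof -
  have lP: "length P = \<mu>" and lx: "\<forall>x\<in>set P. length x = n" using vP by (auto simp: valid_def)
  have mupos: "\<mu> > 0" using mu k1 by (metis add_gr_0 less_le_trans mult_pos_pos zero_less_one)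
  have n1: "n \<ge> 1" using n2 by simp
  have c0: "c \<ge> 0" using cdef by simp
  define g where "g = gP ks P"
  have Pne: "set P \<noteq> {}" using lP mupos by auto
  have "g \<in> (\<lambda>x. dst ks (unitation x)) ` set P" unfolding g_def gP_def using Pne by (intro Min_in) auto
  then obtain x0 where x0: "x0 \<in> set P" "dst ks (unitation x0) = g" by auto
  have g1: "g \<ge> 1"
  proof (rule ccontr)
    assume "\<not> g \<ge> 1"
    then have "unitation x0 = ks" using x0 by (auto simp: dst_def)
    then show False using nopt x0 by auto
  qed
  from x0(1) obtain i0 where i0: "i0 < \<mu>" "P ! i0 = x0" using lP by (auto simp: in_set_conv_nth)
  define A where "A = {y. dst ks (unitation y) < g}"
  define H where "H = (\<lambda>P'. ennreal (hh c (gP ks P')))"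
  define B where "B = (\<lambda>y. ennreal (hh c (min g (dst ks (unitation y)))))"
  define K where "K = (\<lambda>y. let Ps = P @ [y]; c = clearing pheno_dist 1 \<kappa> f Ps; m = Min (c ` {..<\<mu>})
       in map_pmf (\<lambda>z. if c z \<le> c \<mu> then take z Ps @ drop (Suc z) Ps else P)
                  (pmf_of_set {z. z < \<mu> \<and> c z = m}))"
  have e: "ea_step pheno_dist 1 \<kappa> \<mu> n f P = bind_pmf (pmf_of_set {..<\<mu>}) (\<lambda>i. bind_pmf (mutate n (P ! i)) K)"
    unfolding ea_step_def K_def by (rule refl)
  have su: "set_pmf (pmf_of_set {..<\<mu>}) = {..<\<mu>}" using mupos by (intro set_pmf_of_set) auto
  have KB: "(\<integral>\<^sup>+P'. H P' \<partial>measure_pmf (K y)) \<le> B y" if i: "i < \<mu>" and y: "y \<in> set_pmf (mutate n (P ! i))" for i y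
  proof (rule nn_le_bound)
    fix P' assume P': "P' \<in> set_pmf (K y)"
    have ly: "length y = n" using mutate_length[OF n1 y] i lP lx by auto
    from inner_support[OF mupos P'[unfolded K_def]] obtain z where z: "z < \<mu>"
      "clearing pheno_dist 1 \<kappa> f (P @ [y]) z = Min (clearing pheno_dist 1 \<kappa> f (P @ [y]) ` {..<\<mu>})"
      and P'e: "P' = (if clearing pheno_dist 1 \<kappa> f (P @ [y]) z \<le> clearing pheno_dist 1 \<kappa> f (P @ [y]) \<mu>
           then take z (P @ [y]) @ drop (Suc z) (P @ [y]) else P)" by blast
    from step_det(2)[OF lP lx ly fpos k1 mu ks nopt z]
    have cz: "clearing pheno_dist 1 \<kappa> f (P @ [y]) z \<le> clearing pheno_dist 1 \<kappa> f (P @ [y]) \<mu>"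
      and lev: "unitation ` set (P @ [y]) \<subseteq> unitation ` set P'" using P'e by auto
    have "gP ks P' \<le> g"
      using gP_le_lev[of x0 P' ks] lev x0 by auto
    moreover have "gP ks P' \<le> dst ks (unitation y)"
      using gP_le_lev[of y P' ks] lev by auto
    ultimately have "gP ks P' \<le> min g (dst ks (unitation y))" by simp
    then show "H P' \<le> B y" unfolding H_def B_def by (intro ennreal_leI hh_mono c0)
  qed
  have Bgain: "B y + ennreal (c / real g) * indicator A y \<le> ennreal (hh c g)" for y
  proof (cases "y \<in> A")
    case True
    then have "min g (dst ks (unitation y)) \<le> g - 1" by (auto simp: A_def)
    then have "hh c (min g (dst ks (unitation y))) \<le> hh c (g - 1)" by (intro hh_mono c0)
    then have "hh c (min g (dst ks (unitation y))) + c / real g \<le> hh c g" using hh_step[OF g1, of c] by simp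
    then show ?thesis using True c0 hh_nonneg[OF c0] unfolding B_def
      by (simp add: ennreal_plus[symmetric] del: ennreal_plus)
  next
    case False
    then have "min g (dst ks (unitation y)) = g" by (auto simp: A_def)
    then show ?thesis using False unfolding B_def by simp
  qed
  have perI: "(\<integral>\<^sup>+y. B y \<partial>measure_pmf (mutate n (P ! i))) + ennreal (c / real g) * emeasure (measure_pmf (mutate n (P ! i))) A
      \<le> ennreal (hh c g)" for i
    by (rule nn_le_bound2) (rule Bgain)
  have lx0: "length x0 = n" using x0 lx by auto
  have pr: "measure_pmf.prob (mutate n x0) A \<ge> real g * ((1 / real n) * (1 - 1 / real n) ^ (n - 1))"
    unfolding A_def by (rule mut_prob[OF n1 lx0 ks x0(2) g1])
  have "real g * ((1 / real n) * (1 - 1 / real n) ^ (n - 1)) \<ge> real g * ((1 / real n) * exp (-1))"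
    using exp_bound[OF n2] g1 by (intro mult_left_mono) auto
  with pr have pr2: "measure_pmf.prob (mutate n x0) A \<ge> real g / (real n * exp 1)"
    by (simp add: exp_minus field_simps)
  have "c / real g * measure_pmf.prob (mutate n x0) A \<ge> c / real g * (real g / (real n * exp 1))"
    using pr2 c0 by (intro mult_left_mono) auto
  also have "c / real g * (real g / (real n * exp 1)) = real \<mu>" using g1 n1 cdef by (simp add: field_simps)
  finally have gain: "c / real g * measure_pmf.prob (mutate n x0) A \<ge> real \<mu>" .
  have gain': "ennreal (c / real g) * emeasure (measure_pmf (mutate n x0)) A \<ge> ennreal (real \<mu>)"
    using gain c0 by (simp add: measure_pmf.emeasure_eq_measure ennreal_mult''[symmetric] ennreal_leI)
  define E where "E = (\<lambda>i. \<integral>\<^sup>+y. (\<integral>\<^sup>+P'. H P' \<partial>measure_pmf (K y)) \<partial>measure_pmf (mutate n (P ! i)))"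
  have EB: "E i \<le> (\<integral>\<^sup>+y. B y \<partial>measure_pmf (mutate n (P ! i)))" if "i < \<mu>" for i
    unfolding E_def by (rule nn_integral_mono_AE) (use KB[OF that] in \<open>simp add: AE_measure_pmf_iff\<close>)
  have outer: "E i + ennreal (real \<mu>) * indicator {i0} i \<le> ennreal (hh c g)" if "i \<in> set_pmf (pmf_of_set {..<\<mu>})" for i
  proof -
    have i: "i < \<mu>" using that su by auto
    show ?thesis
    proof (cases "i = i0")
      case True
      have "E i + ennreal (real \<mu>) \<le> (\<integral>\<^sup>+y. B y \<partial>measure_pmf (mutate n (P ! i))) + ennreal (c / real g) * emeasure (measure_pmf (mutate n (P ! i))) A"
        using EB[OF i] gain' True i0 by (intro add_mono) auto
      also have "\<dots> \<le> ennreal (hh c g)" by (rule perI)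
      finally show ?thesis using True by simp
    next
      case False
      have "E i \<le> (\<integral>\<^sup>+y. B y \<partial>measure_pmf (mutate n (P ! i))) + ennreal (c / real g) * emeasure (measure_pmf (mutate n (P ! i))) A"
        using EB[OF i] by (meson add_increasing2 order.trans zero_le)
      also have "\<dots> \<le> ennreal (hh c g)" by (rule perI)
      finally show ?thesis using False by simp
    qed
  qed
  have "(\<integral>\<^sup>+i. E i \<partial>measure_pmf (pmf_of_set {..<\<mu>})) + ennreal (real \<mu>) * emeasure (measure_pmf (pmf_of_set {..<\<mu>})) {i0}
      \<le> ennreal (hh c g)"
    by (rule nn_le_bound2) (rule outer)
  moreover have "emeasure (measure_pmf (pmf_of_set {..<\<mu>})) {i0} = ennreal (1 / real \<mu>)"
  proof -
    have "measure_pmf.prob (pmf_of_set {..<\<mu>}) {i0} = card ({..<\<mu>} \<inter> {i0}) / card {..<\<mu>}"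
      using mupos by (intro measure_pmf_of_set) auto
    also have "\<dots> = 1 / real \<mu>" using i0 by simp
    finally show ?thesis by (simp add: measure_pmf.emeasure_eq_measure)
  qed
  moreover have "ennreal (real \<mu>) * ennreal (1 / real \<mu>) = 1"
    using mupos by (simp add: ennreal_mult''[symmetric])
  moreover have "(\<integral>\<^sup>+P'. H P' \<partial>measure_pmf (ea_step pheno_dist 1 \<kappa> \<mu> n f P)) = (\<integral>\<^sup>+i. E i \<partial>measure_pmf (pmf_of_set {..<\<mu>}))"
    unfolding e E_def by (simp only: nn_integral_bind_pmf)
  ultimately show ?thesis unfolding H_def g_def by simp
qed




lemma init_support:
  assumes "P \<in> set_pmf (ea_init \<mu> n)" shows "valid \<mu> n P"
proof -
  let ?S = "{P :: bool list list. length P = \<mu> \<and> (\<forall>x\<in>set P. length x = n)}"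
  have fx: "finite {x :: bool list. length x = n}"
    using finite_lists_length_eq[of "UNIV :: bool set" n] by simp
  have "?S \<subseteq> {xs. set xs \<subseteq> {x. length x = n} \<and> length xs = \<mu>}" by auto
  then have fin: "finite ?S" using finite_lists_length_eq[OF fx, of \<mu>] finite_subset by blast
  have "replicate \<mu> (replicate n False) \<in> ?S" by auto
  then have ne: "?S \<noteq> {}" by blast
  show ?thesis using assms set_pmf_of_set[OF ne fin] unfolding ea_init_def valid_def by auto
qed

lemma path_support:
  assumes "\<mu> > 0" "n \<ge> 1"
  shows "ps \<in> set_pmf (ea_path d \<sigma> \<kappa> \<mu> n f t) \<Longrightarrow> ps \<noteq> [] \<and> valid \<mu> n (last ps)"
proof (induction t arbitrary: ps)
  case 0
  then show ?case using init_support by auto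
next
  case (Suc t)
  then obtain qs P where qs: "qs \<in> set_pmf (ea_path d \<sigma> \<kappa> \<mu> n f t)"
    and P: "P \<in> set_pmf (ea_step d \<sigma> \<kappa> \<mu> n f (last qs))" and ps: "ps = qs @ [P]" by auto
  have "valid \<mu> n (last qs)" using Suc.IH[OF qs] by simp
  then have "valid \<mu> n P" using step_valid[OF _ assms(1) assms(2) P] by simp
  then show ?case using ps by simp
qed

lemma harm_bound: "d \<ge> 1 \<Longrightarrow> (\<Sum>i\<in>{1..d}. 1 / real i) \<le> 1 + ln (real d)"
proof (induction d rule: dec_induct)
  case base then show ?case by simp
next
  case (step d)
  have d: "real d \<ge> 1" using step by simp
  have "ln (real d / real (Suc d)) \<le> real d / real (Suc d) - 1" using d by (intro ln_le_minus_one) simp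
  moreover have "real d / real (Suc d) - 1 = - 1 / real (Suc d)" by (simp add: field_simps)
  moreover have "ln (real d / real (Suc d)) = ln (real d) - ln (real (Suc d))" using d by (intro ln_divide_pos) auto
  ultimately have l: "1 / real (Suc d) \<le> ln (real (Suc d)) - ln (real d)" by simp
  have "{1..Suc d} = insert (Suc d) {1..d}" by auto
  then have "(\<Sum>i\<in>{1..Suc d}. 1 / real i) = (\<Sum>i\<in>{1..d}. 1 / real i) + 1 / real (Suc d)" by simp
  then show ?case using step.IH l by simp
qed

lemma ln2: "ln (2::real) \<ge> 1 / 2"
proof -
  have "ln (inverse (2::real)) \<le> inverse 2 - 1" by (rule ln_le_minus_one) simp
  moreover have "ln (inverse (2::real)) = - ln 2" by (rule ln_inverse)
  ultimately show ?thesis by simp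
qed




lemma dst_le: "a \<le> n \<Longrightarrow> ks \<le> n \<Longrightarrow> dst ks a \<le> n"
  unfolding dst_def by auto

lemma main_bound:
  fixes n \<kappa> \<mu> :: nat and u :: "nat \<Rightarrow> real"
  assumes n2: "n \<ge> 2" and k1: "1 \<le> \<kappa>" and mu: "(n + 1) * \<kappa> \<le> \<mu>" and upos: "\<forall>k\<le>n. u k > 0"
  shows "expected_opt_time pheno_dist 1 \<kappa> \<mu> n u \<le> ennreal (hh (exp 1 * real n * real \<mu>) n)"
proof -
  define c where "c = exp 1 * real n * real \<mu>"
  have c0: "c \<ge> 0" unfolding c_def by simp
  have mupos: "\<mu> > 0" using mu k1 by (metis add_gr_0 less_le_trans mult_pos_pos zero_less_one)
  have n1: "n \<ge> 1" using n2 by simp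
  have "Max (u ` {0..n}) \<in> u ` {0..n}" by (intro Min_in Max_in) auto
  then obtain ks where ks0: "ks \<in> {0..n}" "Max (u ` {0..n}) = u ks" by (rule imageE)
  then have ks: "ks \<le> n" "u ks = Max (u ` {0..n})" by auto
  define f where "f = (\<lambda>x. u (unitation x))"
  have fpos: "f x > 0" if "length x = n" for x
    using upos unit_le[of x] that unfolding f_def by auto
  define Q where "Q = {ps. \<forall>P\<in>set ps. \<forall>x\<in>set P. \<not> optimal n u x}"
  define M where "M = (\<lambda>t. measure_pmf (ea_path pheno_dist 1 \<kappa> \<mu> n f t))"
  define V where "V = (\<lambda>t. \<integral>\<^sup>+ps. ennreal (hh c (gP ks (last ps))) * indicator Q ps \<partial>M t)"
  have supp: "ps \<noteq> [] \<and> valid \<mu> n (last ps)" if "ps \<in> set_pmf (ea_path pheno_dist 1 \<kappa> \<mu> n f t)" for ps t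
    using path_support[OF mupos n1 that] .
  have nopt: "ks \<notin> unitation ` set (last ps)" if "ps \<in> Q" "ps \<noteq> []" for ps
  proof
    assume "ks \<in> unitation ` set (last ps)"
    then obtain x where x: "x \<in> set (last ps)" "unitation x = ks" by auto
    have "last ps \<in> set ps" using that(2) by simp
    then have "\<not> optimal n u x" using that(1) x(1) unfolding Q_def by blast
    then show False using x ks unfolding optimal_def by simp
  qed
  have Vstep: "V (Suc t) + emeasure (M t) Q \<le> V t" for t
  proof -
    define I where "I = (\<lambda>ps. \<integral>\<^sup>+P. ennreal (hh c (gP ks P)) * indicator Q (ps @ [P])
                 \<partial>measure_pmf (ea_step pheno_dist 1 \<kappa> \<mu> n f (last ps)))"
    have "V (Suc t) = (\<integral>\<^sup>+ps. I ps \<partial>M t)"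
      unfolding V_def M_def I_def by simp
    moreover have "emeasure (M t) Q = (\<integral>\<^sup>+ps. indicator Q ps \<partial>M t)"
      unfolding M_def by simp
    ultimately have "V (Suc t) + emeasure (M t) Q = (\<integral>\<^sup>+ps. I ps + indicator Q ps \<partial>M t)"
      unfolding M_def by (simp add: nn_integral_add)
    also have "\<dots> \<le> V t"
      unfolding V_def M_def
    proof (rule nn_integral_mono_AE, unfold AE_measure_pmf_iff, intro ballI)
      fix ps assume ps: "ps \<in> set_pmf (ea_path pheno_dist 1 \<kappa> \<mu> n f t)"
      show "I ps + indicator Q ps \<le> ennreal (hh c (gP ks (last ps))) * indicator Q ps"
      proof (cases "ps \<in> Q")
        case False
        then have "\<And>P. ps @ [P] \<notin> Q" unfolding Q_def by auto
        then have "I ps = 0" unfolding I_def by simp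
        then show ?thesis using False by simp
      next
        case True
        have ne: "ps \<noteq> []" and v: "valid \<mu> n (last ps)" using supp[OF ps] by auto
        have "I ps \<le> (\<integral>\<^sup>+P. ennreal (hh c (gP ks P)) \<partial>measure_pmf (ea_step pheno_dist 1 \<kappa> \<mu> n f (last ps)))"
          unfolding I_def by (intro nn_integral_mono) (auto split: split_indicator)
        then have "I ps + 1 \<le> ennreal (hh c (gP ks (last ps)))"
          using drift[OF n2 k1 mu ks(1) fpos v nopt[OF True ne] c_def] by (meson add_right_mono order.trans)
        then show ?thesis using True by simp
      qed
    qed
    finally show ?thesis .
  qed
  have sumV: "(\<Sum>t<N. emeasure (M t) Q) + V N \<le> V 0" for N
  proof (induction N)
    case 0 then show ?case by simp
  next
    case (Suc N)
    have "(\<Sum>t<Suc N. emeasure (M t) Q) + V (Suc N) = (\<Sum>t<N. emeasure (M t) Q) + (V (Suc N) + emeasure (M N) Q)"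
      by (simp add: algebra_simps)
    also have "\<dots> \<le> (\<Sum>t<N. emeasure (M t) Q) + V N" by (intro add_left_mono Vstep)
    also have "\<dots> \<le> V 0" by (rule Suc.IH)
    finally show ?case .
  qed
  have V0: "V 0 \<le> ennreal (hh c n)"
    unfolding V_def M_def
  proof (rule nn_le_bound)
    fix ps assume ps: "ps \<in> set_pmf (ea_path pheno_dist 1 \<kappa> \<mu> n f 0)"
    have ne: "ps \<noteq> []" and v: "valid \<mu> n (last ps)" using supp[OF ps] by auto
    have "last ps \<noteq> []" using v mupos unfolding valid_def by auto
    then obtain x where x: "x \<in> set (last ps)" by (meson last_in_set list.set_sel(1))
    have "gP ks (last ps) \<le> dst ks (unitation x)" by (rule gP_le[OF x])
    also have "\<dots> \<le> n" using unit_le[of x] v x ks unfolding valid_def by (intro dst_le) auto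
    finally have "hh c (gP ks (last ps)) \<le> hh c n" by (intro hh_mono c0)
    then show "ennreal (hh c (gP ks (last ps))) * indicator Q ps \<le> ennreal (hh c n)"
      by (auto split: split_indicator intro: ennreal_leI)
  qed
  have "expected_opt_time pheno_dist 1 \<kappa> \<mu> n u = (\<Sum>t. emeasure (M t) Q)"
    unfolding expected_opt_time_def M_def Q_def f_def by (simp add: measure_pmf.emeasure_eq_measure)
  also have "\<dots> \<le> ennreal (hh c n)"
  proof (rule suminf_le_const)
    show "summable (\<lambda>t. emeasure (M t) Q)" by simp
    fix N
    have "(\<Sum>t<N. emeasure (M t) Q) \<le> (\<Sum>t<N. emeasure (M t) Q) + V N" by simp
    also have "\<dots> \<le> V 0" by (rule sumV)
    finally show "(\<Sum>t<N. emeasure (M t) Q) \<le> ennreal (hh c n)" using V0 by simp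
  qed
  finally show ?thesis unfolding c_def .
qed

theorem theorem1:
  shows "\<exists>C>0. \<forall>(n::nat) (\<kappa>::nat) (\<mu>::nat) (u::nat \<Rightarrow> real).
           n \<ge> 2 \<longrightarrow> \<kappa> \<ge> 1 \<longrightarrow> \<mu> \<ge> (n + 1) * \<kappa> \<longrightarrow> (\<forall>k\<le>n. u k > 0) \<longrightarrow>
           expected_opt_time pheno_dist 1 \<kappa> \<mu> n u
             \<le> ennreal (C * real \<mu> * real n * ln (real n))"
proof (intro exI[of _ "3 * exp 1"] conjI allI impI)
  show "(0::real) < 3 * exp 1" by simp
  fix n \<kappa> \<mu> :: nat and u :: "nat \<Rightarrow> real"
  assume n2: "n \<ge> 2" and k1: "\<kappa> \<ge> 1" and mu: "\<mu> \<ge> (n + 1) * \<kappa>" and upos: "\<forall>k\<le>n. u k > 0"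
  define c where "c = exp 1 * real n * real \<mu>"
  have c0: "c \<ge> 0" unfolding c_def by simp
  have "hh c n = c * (\<Sum>i\<in>{1..n}. 1 / real i)" unfolding hh_def by (simp add: sum_distrib_left)
  also have "\<dots> \<le> c * (1 + ln (real n))" using harm_bound[of n] n2 c0 by (intro mult_left_mono) auto
  also have "\<dots> \<le> c * (3 * ln (real n))"
  proof -
    have "ln (real n) \<ge> ln 2" using n2 by simp
    then have "1 + ln (real n) \<le> 3 * ln (real n)" using ln2 by linarith
    then show ?thesis using c0 by (intro mult_left_mono) auto
  qed
  also have "\<dots> = 3 * exp 1 * real \<mu> * real n * ln (real n)" unfolding c_def by simp
  finally have "hh c n \<le> 3 * exp 1 * real \<mu> * real n * ln (real n)" .
  then have "ennreal (hh c n) \<le> ennreal (3 * exp 1 * real \<mu> * real n * ln (real n))" by (rule ennreal_leI)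
  moreover have "expected_opt_time pheno_dist 1 \<kappa> \<mu> n u \<le> ennreal (hh c n)"
    unfolding c_def using main_bound[OF n2 k1 mu upos] .
  ultimately show "expected_opt_time pheno_dist 1 \<kappa> \<mu> n u \<le> ennreal (3 * exp 1 * real \<mu> * real n * ln (real n))"
    by (rule order.trans[rotated])
qed


end
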